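(* Let $\alpha\in(0,1]$. Restrict to elections with exactly two alternatives and to metrics given by the 1-Euclidean space, meaning all agents and alternatives are points of $\mathbb R$ and $d(x,y)=|x-y|$. Then every deterministic voting rule $f$ using ranked preferences with intensities has, under mandatory elicitation, distortion at least $$\max\left(\frac{3-\alpha}{1+\alpha},\ 2\alpha+1\right).$$
   Context: An election $\mathcal E=(N,A,\vec\sigma)$ has agents $N$, alternatives $A$, and for each agent $i$ a preference $\sigma_i=(\pi_i,\Join_i)$. Here $\pi_i:[m]\to A$ is a bijection ($\pi_i(1)$ most preferred) and $\Join_i:[m-1]\to\{\succ,\succ\!\!\succ\}$. The profile $\vec\sigma$ is $\alpha$-consistent with $d$ (mandatory elicitation) if for all $i$ and $j\in[m-1]$: - $\Join_i(j)=\,\succ$ implies $d(i,\pi_i(j+1))\ge d(i,\pi_i(j))>\alpha d(i,\pi_i(j+1))$; - $\Join_i(j)=\,\succ\!\!\succ$ implies $d(i,\pi_i(j))\le\alpha d(i,\pi_i(j+1))$. In this setting the distortion of $a$ is $\mathsf{dist}_\alpha(a,\mathcal E)=\sup_d\sum_i d(i,a)/\min_b\sum_i d(i,b)$, where the supremum ranges over 1-Euclidean metrics $d$ with which $\vec\sigma$ is $\alpha$-consistent. The distortion of $f$ is the supremum of $\mathsf{dist}_\alpha(f(\vec\sigma),\mathcal E)$ over all two-alternative elections. *)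

theory Defs
  imports "HOL-Library.Extended_Real"
begin

(* Intensity symbols: Weak is \<succ>, Strong is \<succ>\<succ>. *)
datatype intensity = Weak | Strong

(* A preference sigma_i = (pi_i, J_i): pi_i : [m] -> A ranks alternatives (pi_i 1 most
   preferred), J_i : [m-1] -> intensity. Alternatives are natural numbers,
   agents are 0..<n. *)
type_synonym pref = "(nat \<Rightarrow> nat) \<times> (nat \<Rightarrow> intensity)"
type_synonym profile = "nat \<Rightarrow> pref"

definition valid_election :: "nat \<Rightarrow> nat set \<Rightarrow> profile \<Rightarrow> bool" where
  "valid_election n A \<sigma> \<longleftrightarrow> n \<ge> 1 \<and> finite A \<and> A \<noteq> {} \<and>
     (\<forall>i<n. bij_betw (fst (\<sigma> i)) {1..card A} A)"

definition euc_d :: "(nat \<Rightarrow> real) \<Rightarrow> (nat \<Rightarrow> real) \<Rightarrow> nat \<Rightarrow> nat \<Rightarrow> real" where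
  "euc_d x y i a = \<bar>x i - y a\<bar>"

definition alpha_consistent ::
  "real \<Rightarrow> nat \<Rightarrow> nat set \<Rightarrow> profile \<Rightarrow> (nat \<Rightarrow> real) \<Rightarrow> (nat \<Rightarrow> real) \<Rightarrow> bool" where
  "alpha_consistent \<alpha> n A \<sigma> x y \<longleftrightarrow>
     (\<forall>i<n. \<forall>j\<in>{1..card A - 1}.
        let \<pi> = fst (\<sigma> i); J = snd (\<sigma> i); d = euc_d x y i in
        (J j = Weak \<longrightarrow> d (\<pi> (j+1)) \<ge> d (\<pi> j) \<and> d (\<pi> j) > \<alpha> * d (\<pi> (j+1))) \<and>
        (J j = Strong \<longrightarrow> d (\<pi> j) \<le> \<alpha> * d (\<pi> (j+1))))"

definition social_cost :: "nat \<Rightarrow> (nat \<Rightarrow> real) \<Rightarrow> (nat \<Rightarrow> real) \<Rightarrow> nat \<Rightarrow> real" where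
  "social_cost n x y a = (\<Sum>i<n. euc_d x y i a)"

(* dist_alpha(a, E): sup over 1-Euclidean metrics alpha-consistent with the profile.
   Ratios are taken in ereal (positive/0 = \<infinity>). *)
definition dist_alt :: "real \<Rightarrow> nat \<Rightarrow> nat set \<Rightarrow> profile \<Rightarrow> nat \<Rightarrow> ereal" where
  "dist_alt \<alpha> n A \<sigma> a =
     (SUP xy \<in> {(x, y). alpha_consistent \<alpha> n A \<sigma> x y}.
        ereal (social_cost n (fst xy) (snd xy) a) /
        ereal (MIN b\<in>A. social_cost n (fst xy) (snd xy) b))"

definition distortion_2 :: "real \<Rightarrow> (nat \<Rightarrow> nat set \<Rightarrow> profile \<Rightarrow> nat) \<Rightarrow> ereal" where
  "distortion_2 \<alpha> f =
     (SUP E \<in> {(n, A, \<sigma>). valid_election n A \<sigma> \<and> card A = 2}.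
        (case E of (n, A, \<sigma>) \<Rightarrow> dist_alt \<alpha> n A \<sigma> (f n A \<sigma>)))"

end

theory Submission
  imports Defs
begin

lemma helper:
  assumes "valid_election n A \<sigma>" "card A = 2" "alpha_consistent \<alpha> n A \<sigma> x y"
    and "r \<le> social_cost n x y (f n A \<sigma>) / (MIN b\<in>A. social_cost n x y b)"
    and "(MIN b\<in>A. social_cost n x y b) > 0"
  shows "ereal r \<le> distortion_2 \<alpha> f"
proof -
  have "ereal r \<le> ereal (social_cost n x y (f n A \<sigma>)) / ereal (MIN b\<in>A. social_cost n x y b)"
    using assms(4,5) by simp
  also have "\<dots> \<le> dist_alt \<alpha> n A \<sigma> (f n A \<sigma>)"
    unfolding dist_alt_def
    by (rule SUP_upper2[where i="(x,y)"]) (use assms(3) in auto)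
  also have "\<dots> \<le> distortion_2 \<alpha> f"
    unfolding distortion_2_def
    by (rule SUP_upper2[where i="(n,A,\<sigma>)"]) (use assms(1,2) in auto)
  finally show ?thesis .
qed

definition p0 :: "nat \<Rightarrow> nat" where "p0 k = (if k = 1 then 0 else 1)"
definition p1 :: "nat \<Rightarrow> nat" where "p1 k = (if k = 1 then 1 else 0)"
definition prof :: "intensity \<Rightarrow> profile" where
  "prof I i = (if i = 0 then (p0, \<lambda>_. I) else (p1, \<lambda>_. I))"

lemma cardA: "card {0::nat,1} = 2" by simp

lemma valid: "valid_election 2 {0,1} (prof I)"
proof -
  have "bij_betw p0 {1..2} {0,1}" unfolding bij_betw_def inj_on_def p0_def
    by (auto simp: image_def)
  moreover have "bij_betw p1 {1..2} {0,1}" unfolding bij_betw_def inj_on_def p1_def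
    by (auto simp: image_def)
  ultimately show ?thesis unfolding valid_election_def prof_def
    by (auto simp: cardA numeral_2_eq_2)
qed

lemma cons_iff:
  "alpha_consistent \<alpha> 2 {0,1} (prof I) x y \<longleftrightarrow>
     (let d0 = \<bar>x 0 - y 0\<bar>; d0' = \<bar>x 0 - y 1\<bar>; d1 = \<bar>x 1 - y 1\<bar>; d1' = \<bar>x 1 - y 0\<bar> in
      (I = Weak \<longrightarrow> d0' \<ge> d0 \<and> d0 > \<alpha> * d0' \<and> d1' \<ge> d1 \<and> d1 > \<alpha> * d1') \<and>
      (I = Strong \<longrightarrow> d0 \<le> \<alpha> * d0' \<and> d1 \<le> \<alpha> * d1'))"
proof -
  have i2: "(\<forall>i<(2::nat). P i) \<longleftrightarrow> P 0 \<and> P 1" for P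
    by (auto simp: less_Suc_eq numeral_2_eq_2)
  show ?thesis
    unfolding alpha_consistent_def cardA
    by (simp only: i2) (auto simp: Let_def prof_def p0_def p1_def euc_d_def)
qed

lemma sc: "social_cost 2 x y a = \<bar>x 0 - y a\<bar> + \<bar>x 1 - y a\<bar>"
  unfolding social_cost_def euc_d_def by (simp add: numeral_2_eq_2)

lemma minAB: "(MIN b\<in>{0::nat,1}. g b) = min (g 0) (g 1)"
  by simp

lemma fcases:
  assumes "\<And>n A \<sigma>. valid_election n A \<sigma> \<Longrightarrow> card A = 2 \<Longrightarrow> f n A \<sigma> \<in> A"
  shows "f 2 {0,1} (prof I) = 0 \<or> f 2 {0,1} (prof I) = 1"
  using assms[OF valid cardA] by auto

lemma bound1:
  assumes a: "0 < \<alpha>" "\<alpha> \<le> 1"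
    and hf: "\<And>n A \<sigma>. valid_election n A \<sigma> \<Longrightarrow> card A = 2 \<Longrightarrow> f n A \<sigma> \<in> A"
  shows "ereal (2 * \<alpha> + 1) \<le> distortion_2 \<alpha> f"
proof (cases "f 2 {0,1} (prof Strong) = 0")
  case True
  define x :: "nat \<Rightarrow> real" where "x = (\<lambda>i. if i = 0 then \<alpha> else 1 + \<alpha>)"
  define y :: "nat \<Rightarrow> real" where "y = (\<lambda>i. if i = 0 then 0 else 1 + \<alpha>)"
  show ?thesis
    apply (rule helper[OF valid cardA, where x=x and y=y])
    unfolding cons_iff sc minAB
    using a True by (auto simp: x_def y_def Let_def)
next
  case False
  then have T: "f 2 {0,1} (prof Strong) = 1" using fcases[of f Strong] hf by metis
  define x :: "nat \<Rightarrow> real" where "x = (\<lambda>i. if i = 0 then 0 else 1)"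
  define y :: "nat \<Rightarrow> real" where "y = (\<lambda>i. if i = 0 then 0 else 1 + \<alpha>)"
  show ?thesis
    apply (rule helper[OF valid cardA, where x=x and y=y])
    unfolding cons_iff sc minAB
    using a T by (auto simp: x_def y_def Let_def)
qed

lemma bound2_c:
  assumes a: "0 < \<alpha>" "\<alpha> < 1"
    and hf: "\<And>n A \<sigma>. valid_election n A \<sigma> \<Longrightarrow> card A = 2 \<Longrightarrow> f n A \<sigma> \<in> A"
    and c1: "1 < c" and c2: "c < (3 - \<alpha>) / (1 + \<alpha>)"
  shows "ereal c \<le> distortion_2 \<alpha> f"
proof -
  define t where "t = (c + 1) / (c - 1)"
  have cm: "c - 1 > 0" using c1 by simp
  have tm1: "t - 1 = 2 / (c - 1)" unfolding t_def using cm by (simp add: field_simps)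
  have tp1: "t + 1 = 2 * c / (c - 1)" unfolding t_def using cm by (simp add: field_simps)
  have rat: "(t + 1) / (t - 1) = c" unfolding tm1 tp1 using cm by (simp add: field_simps)
  have c3: "c * (1 + \<alpha>) < 3 - \<alpha>" using c2 a by (simp add: field_simps)
  have "c * \<alpha> > 1 * \<alpha>" using c1 a by (intro mult_strict_right_mono) auto
  moreover have "c * (1 + \<alpha>) = c + c * \<alpha>" by (simp add: algebra_simps)
  ultimately have "c < 3" using c3 a by linarith
  hence t2: "t > 2" unfolding t_def using cm c1 by (simp add: field_simps)
  have "(c + 1) * (1 - \<alpha>) > 2 * (c - 1)" using c3 by (simp add: algebra_simps)
  hence "t * (1 - \<alpha>) > 2" unfolding t_def using cm by (simp add: field_simps)
  hence key: "t - 2 > \<alpha> * t" by (simp add: algebra_simps)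
  show ?thesis
  proof (cases "f 2 {0,1} (prof Weak) = 0")
    case True
    define x :: "nat \<Rightarrow> real" where "x = (\<lambda>i. if i = 0 then 1 else t)"
    define y :: "nat \<Rightarrow> real" where "y = (\<lambda>i. if i = 0 then 0 else 2)"
    show ?thesis
      apply (rule helper[OF valid cardA, where x=x and y=y])
      unfolding cons_iff sc minAB
      using a True t2 key rat by (auto simp: x_def y_def Let_def min_def add.commute)
  next
    case False
    then have T: "f 2 {0,1} (prof Weak) = 1" using fcases[of f Weak] hf by metis
    define x :: "nat \<Rightarrow> real" where "x = (\<lambda>i. if i = 0 then 2 - t else 1)"
    define y :: "nat \<Rightarrow> real" where "y = (\<lambda>i. if i = 0 then 0 else 2)"
    show ?thesis
      apply (rule helper[OF valid cardA, where x=x and y=y])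
      unfolding cons_iff sc minAB
      using a T t2 key rat by (auto simp: x_def y_def Let_def min_def)
  qed
qed

lemma bound2:
  assumes a: "0 < \<alpha>" "\<alpha> < 1"
    and hf: "\<And>n A \<sigma>. valid_election n A \<sigma> \<Longrightarrow> card A = 2 \<Longrightarrow> f n A \<sigma> \<in> A"
  shows "ereal ((3 - \<alpha>) / (1 + \<alpha>)) \<le> distortion_2 \<alpha> f"
proof (rule dense_le)
  fix z assume z: "z < ereal ((3 - \<alpha>) / (1 + \<alpha>))"
  define B where "B = (3 - \<alpha>) / (1 + \<alpha>)"
  have B1: "B > 1" unfolding B_def using a by (simp add: field_simps)
  show "z \<le> distortion_2 \<alpha> f"
  proof (cases z)
    case (real c)
    define c' where "c' = max c ((1 + B) / 2)"
    have cB: "c < B" using z real unfolding B_def by simp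
    have "(1 + B) / 2 > 1" "(1 + B) / 2 < B" using B1 by auto
    hence "c' > 1" "c' < B" using cB unfolding c'_def by (auto simp: max_def)
    hence "ereal c' \<le> distortion_2 \<alpha> f" using bound2_c[of \<alpha> f c'] a hf unfolding B_def by blast
    moreover have "z \<le> ereal c'" using real unfolding c'_def by simp
    ultimately show ?thesis by (rule order_trans[rotated])
  next
    case PInf thus ?thesis using z by simp
  next
    case MInf thus ?thesis by simp
  qed
qed

theorem theorem6:
  fixes \<alpha> :: real and f :: "nat \<Rightarrow> nat set \<Rightarrow> profile \<Rightarrow> nat"
  assumes "0 < \<alpha>" and "\<alpha> \<le> 1"
    and "\<And>n A \<sigma>. valid_election n A \<sigma> \<Longrightarrow> card A = 2 \<Longrightarrow> f n A \<sigma> \<in> A"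
  shows "distortion_2 \<alpha> f \<ge> ereal (max ((3 - \<alpha>) / (1 + \<alpha>)) (2 * \<alpha> + 1))"
proof (cases "\<alpha> < 1")
  case True
  then show ?thesis using bound1[OF assms] bound2[OF assms(1) True assms(3)]
    by (simp add: max_def)
next
  case False
  hence "\<alpha> = 1" using assms(2) by simp
  hence "max ((3 - \<alpha>) / (1 + \<alpha>)) (2 * \<alpha> + 1) = 2 * \<alpha> + 1" by simp
  then show ?thesis using bound1[OF assms] by simp
qed

end
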